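(* Let $\pi=\sigma[\alpha_1,\dots,\alpha_m]$ be an involution, where $\sigma$ is a simple permutation of length $m\ge 4$ and $\alpha_1,\dots,\alpha_m$ are nonempty permutations. Then $\sigma$ is an involution and $\alpha_i=\alpha_{\sigma(i)}^{-1}$ for all $i\in[m]$.
   Context: An interval of $\pi\in S_n$ is a set of contiguous indices $[a,b]$ whose image under $\pi$ is a set of consecutive integers; $\pi$ is simple if its only intervals have size $0$, $1$, or $n$. For $\sigma\in S_m$ and nonempty permutations $\alpha_1,\dots,\alpha_m$, the inflation $\sigma[\alpha_1,\dots,\alpha_m]$ is the permutation obtained by replacing each entry $\sigma(i)$ by an interval (contiguous positions, consecutive values) order-isomorphic to $\alpha_i$. An involution is a permutation equal to its own inverse. *)

theory Defs
  imports "HOL-Combinatorics.Permutations"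
begin

text \<open>Conventions: a permutation of length n is a function p with p permutes {..<n}
  (positions and values are 0-based, i.e. [n] is represented by {0,...,n-1}).\<close>

definition is_interval :: "(nat \<Rightarrow> nat) \<Rightarrow> nat \<Rightarrow> nat \<Rightarrow> bool" where
  "is_interval p a b \<longleftrightarrow> a \<le> b \<and> (\<exists>c. p ` {a..b} = {c..c + (b - a)})"

definition simple_perm :: "nat \<Rightarrow> (nat \<Rightarrow> nat) \<Rightarrow> bool" where
  "simple_perm n p \<longleftrightarrow> p permutes {..<n} \<and>
     (\<forall>a b. b < n \<and> is_interval p a b \<longrightarrow> a = b \<or> (a = 0 \<and> b = n - 1))"

definition involution :: "(nat \<Rightarrow> nat) \<Rightarrow> bool" where
  "involution p \<longleftrightarrow> inv p = p"

text \<open>Block i of the inflation occupies positions blk_start l i, ..., blk_start l (i+1) - 1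
  and values val_start m sigma l i, ..., val_start m sigma l i + l i - 1.\<close>

definition blk_start :: "(nat \<Rightarrow> nat) \<Rightarrow> nat \<Rightarrow> nat" where
  "blk_start l i = (\<Sum>j<i. l j)"

definition val_start :: "nat \<Rightarrow> (nat \<Rightarrow> nat) \<Rightarrow> (nat \<Rightarrow> nat) \<Rightarrow> nat \<Rightarrow> nat" where
  "val_start m \<sigma> l i = (\<Sum>j\<in>{j. j < m \<and> \<sigma> j < \<sigma> i}. l j)"

text \<open>inflation m sigma l alpha = sigma[alpha_0,...,alpha_{m-1}], where alpha i is a
  permutation of length l i.\<close>

definition inflation ::
  "nat \<Rightarrow> (nat \<Rightarrow> nat) \<Rightarrow> (nat \<Rightarrow> nat) \<Rightarrow> (nat \<Rightarrow> nat \<Rightarrow> nat) \<Rightarrow> nat \<Rightarrow> nat" where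
  "inflation m \<sigma> l \<alpha> = (\<lambda>x.
     if x < blk_start l m then
       (let i = (THE i. i < m \<and> blk_start l i \<le> x \<and> x < blk_start l (Suc i))
        in val_start m \<sigma> l i + \<alpha> i (x - blk_start l i))
     else x)"

end

theory Submission
  imports Defs
begin


lemma blk_Suc: "blk_start l (Suc i) = blk_start l i + l i"
  by (simp add: blk_start_def)

lemma blk_mono: "i \<le> j \<Longrightarrow> blk_start l i \<le> blk_start l j"
  unfolding blk_start_def by (rule sum_mono2) auto

lemma blk_cover: "x < blk_start l n \<Longrightarrow> \<exists>i<n. blk_start l i \<le> x \<and> x < blk_start l (Suc i)"
proof (induction n)
  case 0 then show ?case by (simp add: blk_start_def)
next
  case (Suc n)
  show ?case
  proof (cases "x < blk_start l n")
    case True then show ?thesis using Suc.IH by (meson less_Suc_eq)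
  next
    case False then show ?thesis using Suc.prems by (intro exI[of _ n]) auto
  qed
qed

lemma blk_unique: "blk_start l i \<le> x \<Longrightarrow> x < blk_start l (Suc i) \<Longrightarrow>
   blk_start l j \<le> x \<Longrightarrow> x < blk_start l (Suc j) \<Longrightarrow> i = j"
proof (rule ccontr)
  assume a: "blk_start l i \<le> x" "x < blk_start l (Suc i)" "blk_start l j \<le> x" "x < blk_start l (Suc j)" "i \<noteq> j"
  show False
  proof (cases "i < j")
    case True then have "blk_start l (Suc i) \<le> blk_start l j" by (intro blk_mono) auto
    then show False using a by auto
  next
    case False then have "blk_start l (Suc j) \<le> blk_start l i" using a by (intro blk_mono) auto
    then show False using a by auto
  qed
qed

lemma infl_at:
  assumes "i < m" "k < l i"
  shows "inflation m \<sigma> l \<alpha> (blk_start l i + k) = val_start m \<sigma> l i + \<alpha> i (blk_start l i + k - blk_start l i)"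
proof -
  let ?x = "blk_start l i + k"
  have lt: "?x < blk_start l (Suc i)" using assms by (simp add: blk_Suc)
  moreover have "blk_start l (Suc i) \<le> blk_start l m" using assms by (intro blk_mono) auto
  ultimately have x: "?x < blk_start l m" by linarith
  have "(THE j. j < m \<and> blk_start l j \<le> ?x \<and> ?x < blk_start l (Suc j)) = i"
    apply (rule the_equality)
    using assms lt apply simp
    using lt blk_unique by (metis le_add1)
  then show ?thesis using x unfolding inflation_def Let_def by simp
qed



locale infl =
  fixes m :: nat and \<sigma> :: "nat \<Rightarrow> nat" and l :: "nat \<Rightarrow> nat" and \<alpha> :: "nat \<Rightarrow> nat \<Rightarrow> nat"
  assumes m4: "m \<ge> 4"
    and simpl: "simple_perm m \<sigma>"
    and la: "\<forall>i<m. l i \<ge> 1 \<and> \<alpha> i permutes {..<l i}"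
    and inv: "involution (inflation m \<sigma> l \<alpha>)"
begin

abbreviation "s \<equiv> blk_start l"
abbreviation "v \<equiv> val_start m \<sigma> l"
abbreviation "\<pi> \<equiv> inflation m \<sigma> l \<alpha>"
abbreviation "N \<equiv> blk_start l m"

lemma sperm: "\<sigma> permutes {..<m}" using simpl by (simp add: simple_perm_def)

lemma sig_lt: "i < m \<Longrightarrow> \<sigma> i < m" using permutes_in_image[OF sperm, of i] by simp

lemma sig_inj: "i < m \<Longrightarrow> j < m \<Longrightarrow> \<sigma> i = \<sigma> j \<Longrightarrow> i = j"
  using sperm by (metis permutes_inj injD)

lemma alpha_lt: "i < m \<Longrightarrow> k < l i \<Longrightarrow> \<alpha> i k < l i"
  using la permutes_in_image[of "\<alpha> i" "{..<l i}" k] by simp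

lemma alpha_inj: "i < m \<Longrightarrow> \<alpha> i k = \<alpha> i k' \<Longrightarrow> k = k'"
  using la by (metis permutes_inj injD)

lemma pi_at: "i < m \<Longrightarrow> k < l i \<Longrightarrow> \<pi> (s i + k) = v i + \<alpha> i k"
  using infl_at by simp

lemma v_order: assumes "i < m" "j < m" "\<sigma> i < \<sigma> j" shows "v i + l i \<le> v j"
proof -
  have "v i + l i = (\<Sum>t\<in>insert i {t. t < m \<and> \<sigma> t < \<sigma> i}. l t)"
    by (simp add: val_start_def)
  also have "\<dots> \<le> v j" unfolding val_start_def
    by (rule sum_mono2) (use assms in auto)
  finally show ?thesis .
qed

lemma v_le: assumes "i < m" shows "v i + l i \<le> N"
proof -
  have "v i + l i = (\<Sum>t\<in>insert i {t. t < m \<and> \<sigma> t < \<sigma> i}. l t)"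
    by (simp add: val_start_def)
  also have "\<dots> \<le> N" unfolding blk_start_def
    by (rule sum_mono2) (use assms in auto)
  finally show ?thesis .
qed

lemma s_le: "i < m \<Longrightarrow> s i + l i \<le> N"
  using blk_mono[of "Suc i" m l] by (simp add: blk_Suc)

lemma decomp: "x < N \<Longrightarrow> \<exists>i k. i < m \<and> k < l i \<and> x = s i + k"
proof -
  assume "x < N"
  then obtain i where "i < m" "s i \<le> x" "x < s (Suc i)" using blk_cover by blast
  then show ?thesis by (intro exI[of _ i] exI[of _ "x - s i"]) (auto simp: blk_Suc)
qed

lemma pi_out: "x \<ge> N \<Longrightarrow> \<pi> x = x" by (simp add: inflation_def)

lemma pi_inj: "inj_on \<pi> {..<N}"
proof (rule inj_onI)
  fix x y assume "x \<in> {..<N}" "y \<in> {..<N}" and e: "\<pi> x = \<pi> y"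
  then obtain i k j k' where a: "i < m" "k < l i" "x = s i + k" "j < m" "k' < l j" "y = s j + k'"
    using decomp by (metis lessThan_iff)
  have px: "\<pi> x = v i + \<alpha> i k" using pi_at[OF a(1,2)] a(3) by simp
  have py: "\<pi> y = v j + \<alpha> j k'" using pi_at[OF a(4,5)] a(6) by simp
  have ax: "\<alpha> i k < l i" using alpha_lt[OF a(1,2)] .
  have ay: "\<alpha> j k' < l j" using alpha_lt[OF a(4,5)] .
  show "x = y"
  proof (cases "i = j")
    case True
    then have "\<alpha> i k = \<alpha> i k'" using px py e by simp
    then have "k = k'" using alpha_inj[OF a(1)] by blast
    then show ?thesis using a True by simp
  next
    case False
    then have "\<sigma> i \<noteq> \<sigma> j" using sig_inj a(1,4) by blast
    then have "\<sigma> i < \<sigma> j \<or> \<sigma> j < \<sigma> i" by linarith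
    then show ?thesis
    proof
      assume "\<sigma> i < \<sigma> j" then have "v i + l i \<le> v j" using v_order a(1,4) by blast
      then show ?thesis using px py e ax by linarith
    next
      assume "\<sigma> j < \<sigma> i" then have "v j + l j \<le> v i" using v_order a(1,4) by blast
      then show ?thesis using px py e ay by linarith
    qed
  qed
qed

lemma pi_into: "x < N \<Longrightarrow> \<pi> x < N"
proof -
  assume "x < N"
  then obtain i k where a: "i < m" "k < l i" "x = s i + k" using decomp by blast
  then show ?thesis using pi_at[OF a(1,2)] alpha_lt[OF a(1,2)] v_le[OF a(1)] by simp
qed

lemma pi_img: "\<pi> ` {..<N} = {..<N}"
  by (rule endo_inj_surj) (use pi_inj pi_into in auto)

lemma pi_surj: "surj \<pi>"
proof -
  have "y \<in> range \<pi>" for y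
  proof (cases "y < N")
    case True then have "y \<in> \<pi> ` {..<N}" using pi_img by simp
    then show ?thesis by blast
  next
    case False then have "\<pi> y = y" using pi_out by simp
    then show ?thesis by (metis rangeI)
  qed
  then show ?thesis by auto
qed

lemma pipi: "\<pi> (\<pi> x) = x"
proof -
  have "inv \<pi> = \<pi>" using inv by (simp add: involution_def)
  then show ?thesis using pi_surj by (metis surj_f_inv_f)
qed

end


lemma interval_of_subset:
  assumes "a \<le> b" "\<sigma> permutes {..<m}" "b < m" "\<sigma> ` {a..b} \<subseteq> {c..c+(b-a)}"
  shows "is_interval \<sigma> a b"
proof -
  have "inj_on \<sigma> {a..b}" using assms(2) by (meson permutes_inj inj_on_subset subset_UNIV)
  then have "card (\<sigma> ` {a..b}) = card {c..c+(b-a)}" using assms(1) by (simp add: card_image)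
  then have "\<sigma> ` {a..b} = {c..c+(b-a)}" using assms(4) by (intro card_subset_eq) auto
  then show ?thesis using assms(1) unfolding is_interval_def by blast
qed

context infl begin

lemma not_int: "b < m \<Longrightarrow> a \<noteq> b \<Longrightarrow> a \<noteq> 0 \<or> b \<noteq> m - 1 \<Longrightarrow> \<not> is_interval \<sigma> a b"
  using simpl unfolding simple_perm_def by blast

lemma SL1: assumes "\<forall>t. 1 \<le> t \<and> t \<le> m - 2 \<longrightarrow> \<sigma> t < \<sigma> 0" shows False
proof -
  have s0: "\<sigma> 0 < m" using sig_lt m4 by auto
  have ne: "\<sigma> (m-1) \<noteq> \<sigma> 0" using sig_inj[of "m-1" 0] m4 by auto
  show False
  proof (cases "\<sigma> (m-1) < \<sigma> 0")
    case True
    have sub: "\<sigma> ` {1..m-1} \<subseteq> {0..0+(m-1-1)}"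
    proof
      fix y assume "y \<in> \<sigma> ` {1..m-1}"
      then obtain t where t: "t \<in> {1..m-1}" "y = \<sigma> t" by auto
      have "\<sigma> t < \<sigma> 0"
        using assms t True by (cases "t = m - 1") auto
      then show "y \<in> {0..0+(m-1-1)}" using t s0 by auto
    qed
    then have "is_interval \<sigma> 1 (m-1)" using m4 by (intro interval_of_subset[OF _ sperm _ sub]) auto
    then have ii: "is_interval \<sigma> 1 (m-1)" by simp
    have "m-1 < m" "(1::nat) \<noteq> m-1" using m4 by auto
    then show False using not_int[of "m-1" 1] ii m4 by auto
  next
    case False
    then have lt: "\<sigma> 0 < \<sigma> (m-1)" using ne by auto
    have "\<sigma> (m-1) < m" using sig_lt m4 by auto
    have sub: "\<sigma> ` {1..m-2} \<subseteq> {0..0+(m-2-1)}"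
    proof
      fix y assume "y \<in> \<sigma> ` {1..m-2}"
      then obtain t where t: "t \<in> {1..m-2}" "y = \<sigma> t" by auto
      have "\<sigma> t < \<sigma> 0" using assms t by auto
      then show "y \<in> {0..0+(m-2-1)}" using t lt \<open>\<sigma> (m-1) < m\<close> by auto
    qed
    then have "is_interval \<sigma> 1 (m-2)" using m4 by (intro interval_of_subset[OF _ sperm _ sub]) auto
    then have ii: "is_interval \<sigma> 1 (m-2)" by simp
    have "m-2 < m" "(1::nat) \<noteq> m-2" using m4 by auto
    then show False using not_int[of "m-2" 1] ii m4 by auto
  qed
qed

lemma SL2: assumes "\<forall>t. 1 \<le> t \<and> t \<le> m - 2 \<longrightarrow> \<sigma> (m-1) < \<sigma> t" shows False
proof -
  have s0: "\<sigma> 0 < m" "\<sigma> (m-1) < m" "\<And>t. t < m \<Longrightarrow> \<sigma> t < m" using sig_lt m4 by auto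
  have ne: "\<sigma> (m-1) \<noteq> \<sigma> 0" using sig_inj[of "m-1" 0] m4 by auto
  show False
  proof (cases "\<sigma> (m-1) < \<sigma> 0")
    case True
    have sub: "\<sigma> ` {0..m-2} \<subseteq> {1..1+(m-2-0)}"
    proof
      fix y assume "y \<in> \<sigma> ` {0..m-2}"
      then obtain t where t: "t \<in> {0..m-2}" "y = \<sigma> t" by auto
      have "\<sigma> (m-1) < \<sigma> t"
        using assms t True by (cases "t = 0") auto
      moreover have "\<sigma> t < m" using s0(3) t m4 by auto
      ultimately show "y \<in> {1..1+(m-2-0)}" using t m4 by auto
    qed
    then have "is_interval \<sigma> 0 (m-2)" using m4 by (intro interval_of_subset[OF _ sperm _ sub]) auto
    then have ii: "is_interval \<sigma> 0 (m-2)" by simp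
    have "m-2 < m" "(0::nat) \<noteq> m-2" "m - 2 \<noteq> m - 1" using m4 by auto
    then show False using not_int[of "m-2" 0] ii by blast
  next
    case False
    then have lt: "\<sigma> 0 < \<sigma> (m-1)" using ne by auto
    have sub: "\<sigma> ` {1..m-2} \<subseteq> {2..2+(m-2-1)}"
    proof
      fix y assume "y \<in> \<sigma> ` {1..m-2}"
      then obtain t where t: "t \<in> {1..m-2}" "y = \<sigma> t" by auto
      have "\<sigma> (m-1) < \<sigma> t" using assms t by auto
      moreover have "\<sigma> t < m" using s0(3) t m4 by auto
      ultimately show "y \<in> {2..2+(m-2-1)}" using t lt m4 by auto
    qed
    then have "is_interval \<sigma> 1 (m-2)" using m4 by (intro interval_of_subset[OF _ sperm _ sub]) auto
    then have ii: "is_interval \<sigma> 1 (m-2)" by simp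
    have "m-2 < m" "(1::nat) \<noteq> m-2" using m4 by auto
    then show False using not_int[of "m-2" 1] ii m4 by auto
  qed
qed

definition "B i = {s i..<s i + l i}"
definition "V i = {v i..<v i + l i}"

lemma piB: assumes "i < m" shows "\<pi> ` B i = V i"
proof
  show "\<pi> ` B i \<subseteq> V i"
  proof
    fix y assume "y \<in> \<pi> ` B i"
    then obtain x where x: "x \<in> B i" "y = \<pi> x" by auto
    then have "x - s i < l i" "y = \<pi> (s i + (x - s i))" by (auto simp: B_def)
    then obtain k where "k < l i" "y = \<pi> (s i + k)" by blast
    then show "y \<in> V i" using pi_at alpha_lt assms unfolding V_def by auto
  qed
next
  show "V i \<subseteq> \<pi> ` B i"
  proof
    fix y assume "y \<in> V i"
    then have "y - v i < l i" "y = v i + (y - v i)" by (auto simp: V_def)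
    then obtain k' where k': "k' < l i" "y = v i + k'" by blast
    have p: "\<alpha> i permutes {..<l i}" using la assms by auto
    have "k' \<in> \<alpha> i ` {..<l i}" using permutes_image[OF p] k' by simp
    then obtain k where "k < l i" "\<alpha> i k = k'" by auto
    then show "y \<in> \<pi> ` B i" using pi_at[OF assms \<open>k < l i\<close>] k' unfolding B_def
      by (intro image_eqI[of _ _ "s i + k"]) auto
  qed
qed

lemma piV: assumes "i < m" shows "\<pi> ` V i = B i"
proof -
  have "\<pi> ` V i = \<pi> ` \<pi> ` B i" using piB assms by simp
  also have "\<dots> = B i" by (simp add: image_image pipi)
  finally show ?thesis .
qed

lemma pi_eq: "\<pi> x = \<pi> y \<Longrightarrow> x = y" by (metis pipi)

lemma B_disj: assumes "i < m" "j < m" "i \<noteq> j" shows "B i \<inter> B j = {}"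
proof -
  { fix x assume "x \<in> B i" "x \<in> B j"
    then have "i = j" using blk_unique[of l i x j] by (simp add: B_def blk_Suc) }
  then show ?thesis using assms by blast
qed

lemma V_disj: assumes "i < m" "j < m" "i \<noteq> j" shows "V i \<inter> V j = {}"
proof -
  have "\<sigma> i < \<sigma> j \<or> \<sigma> j < \<sigma> i" using sig_inj assms by (metis linorder_neqE_nat)
  then show ?thesis using v_order[of i j] v_order[of j i] assms unfolding V_def by auto
qed

lemma in_B: "x < N \<Longrightarrow> \<exists>j<m. x \<in> B j"
  using decomp unfolding B_def by fastforce

lemma V_lt: "i < m \<Longrightarrow> x \<in> V i \<Longrightarrow> x < N"
  using v_le unfolding V_def by fastforce

lemma card_B: "card (B i) = l i" by (simp add: B_def)
lemma card_V: "card (V i) = l i" by (simp add: V_def)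

end

context infl begin

lemma l_pos: "t < m \<Longrightarrow> l t \<ge> 1" using la by auto

lemma s_in_B: "t < m \<Longrightarrow> s t \<in> B t" using l_pos[of t] by (simp add: B_def)
lemma v_in_V: "t < m \<Longrightarrow> v t \<in> V t" using l_pos[of t] by (simp add: V_def)

lemma s_sucle: "t < u \<Longrightarrow> s (Suc t) \<le> s u" by (rule blk_mono) simp

lemma claim: assumes im: "i < m" shows "\<exists>j<m. V i \<subseteq> B j"
proof (rule ccontr)
  assume nc: "\<not> (\<exists>j<m. V i \<subseteq> B j)"
  define J where "J = {t. t < m \<and> V i \<inter> B t \<noteq> {}}"
  have Jfin: "finite J" unfolding J_def by simp
  have vi: "v i \<in> V i" using v_in_V im .
  then have "v i < N" using V_lt im by blast
  then obtain a0 where a0: "a0 < m" "v i \<in> B a0" using in_B by blast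
  then have a0J: "a0 \<in> J" using vi unfolding J_def by blast
  have "\<not> V i \<subseteq> B a0" using nc a0 by blast
  then obtain y where y: "y \<in> V i" "y \<notin> B a0" by blast
  then have "y < N" using V_lt im by blast
  then obtain b0 where b0: "b0 < m" "y \<in> B b0" using in_B by blast
  then have b0J: "b0 \<in> J" using y unfolding J_def by blast
  have ab0: "a0 \<noteq> b0" using y b0 by blast
  define a where "a = Min J"
  define b where "b = Max J"
  have Jne: "J \<noteq> {}" using a0J by blast
  have aJ: "a \<in> J" unfolding a_def using Jfin Jne by simp
  have bJ: "b \<in> J" unfolding b_def using Jfin Jne by simp
  have "a \<le> a0" "a \<le> b0" unfolding a_def using Jfin a0J b0J by auto
  moreover have "a0 \<le> b" "b0 \<le> b" unfolding b_def using Jfin a0J b0J by auto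
  ultimately have ab: "a < b" using ab0 by linarith
  have bm: "b < m" using bJ unfolding J_def by simp
  have Vconv: "z \<in> V i" if "x \<in> V i" "w \<in> V i" "x \<le> z" "z \<le> w" for x z w
    using that unfolding V_def by auto
  have Bconv: "z \<in> B i" if "x \<in> B i" "w \<in> B i" "x \<le> z" "z \<le> w" for x z w
    using that unfolding B_def by auto
  have idx: "t \<in> J" if H: "p \<in> J" "q \<in> J" "p \<le> t" "t \<le> q" for p q t
  proof (cases "t = p \<or> t = q")
    case True then show ?thesis using H by blast
  next
    case False
    then have pt: "p < t" "t < q" using H by auto
    obtain x where x: "x \<in> V i" "x \<in> B p" using H(1) unfolding J_def by blast
    obtain w where w: "w \<in> V i" "w \<in> B q" using H(2) unfolding J_def by blast
    have tm: "t < m" using pt H(2) unfolding J_def by simp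
    have "x < s (Suc p)" using x by (simp add: B_def blk_Suc)
    also have "\<dots> \<le> s t" using s_sucle pt by blast
    finally have 1: "x \<le> s t" by simp
    have "s t < s (Suc t)" using l_pos[OF tm] by (simp add: blk_Suc)
    also have "\<dots> \<le> s q" using s_sucle pt by blast
    also have "\<dots> \<le> w" using w by (simp add: B_def)
    finally have 2: "s t \<le> w" by simp
    have "s t \<in> V i" using Vconv[OF x(1) w(1) 1 2] .
    then show ?thesis using s_in_B[OF tm] tm unfolding J_def by blast
  qed
  have val: "t \<in> J" if H: "p \<in> J" "q \<in> J" "t < m" "\<sigma> p < \<sigma> t" "\<sigma> t < \<sigma> q" for p q t
  proof -
    obtain x where x: "x \<in> V i" "x \<in> B p" using H(1) unfolding J_def by blast
    obtain w where w: "w \<in> V i" "w \<in> B q" using H(2) unfolding J_def by blast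
    have pm: "p < m" "q < m" using H(1,2) unfolding J_def by auto
    have px: "\<pi> x \<in> V p" using piB[OF pm(1)] x(2) by blast
    have pw: "\<pi> w \<in> V q" using piB[OF pm(2)] w(2) by blast
    have pz: "\<pi> (s t) \<in> V t" using piB[OF H(3)] s_in_B[OF H(3)] by blast
    have o1: "v p + l p \<le> v t" using v_order pm H(3,4) by blast
    have o2: "v t + l t \<le> v q" using v_order pm H(3,5) by blast
    have 1: "\<pi> x \<le> \<pi> (s t)" using px pz o1 unfolding V_def by auto
    have 2: "\<pi> (s t) \<le> \<pi> w" using pw pz o2 unfolding V_def by auto
    have "\<pi> x \<in> B i" "\<pi> w \<in> B i" using piV[OF im] x(1) w(1) by blast+
    then have "\<pi> (s t) \<in> B i" using Bconv 1 2 by blast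
    then have "\<pi> (s t) \<in> \<pi> ` V i" using piV[OF im] by simp
    then obtain u where "u \<in> V i" "\<pi> (s t) = \<pi> u" by blast
    then have "s t \<in> V i" using pi_eq by metis
    then show ?thesis using s_in_B[OF H(3)] H(3) unfolding J_def by blast
  qed
  have Jeq: "J = {a..b}"
  proof
    show "J \<subseteq> {a..b}" unfolding a_def b_def using Jfin by auto
    show "{a..b} \<subseteq> J"
    proof
      fix t assume "t \<in> {a..b}"
      then show "t \<in> J" using idx[OF aJ bJ] by simp
    qed
  qed
  define c where "c = Min (\<sigma> ` J)"
  define d where "d = Max (\<sigma> ` J)"
  have cJ: "c \<in> \<sigma> ` J" unfolding c_def using Jfin Jne by simp
  have dJ: "d \<in> \<sigma> ` J" unfolding d_def using Jfin Jne by simp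
  have JsubM: "J \<subseteq> {..<m}" unfolding J_def by auto
  have dm: "d < m" using dJ JsubM sig_lt by auto
  have img: "\<sigma> ` J = {c..d}"
  proof
    show "\<sigma> ` J \<subseteq> {c..d}" unfolding c_def d_def using Jfin by auto
    show "{c..d} \<subseteq> \<sigma> ` J"
    proof
      fix r assume r: "r \<in> {c..d}"
      show "r \<in> \<sigma> ` J"
      proof (cases "r = c \<or> r = d")
        case True then show ?thesis using cJ dJ by blast
      next
        case False
        then have cr: "c < r" "r < d" using r by auto
        have "r \<in> \<sigma> ` {..<m}" using permutes_image[OF sperm] cr dm by auto
        then obtain t where t: "t < m" "r = \<sigma> t" by auto
        obtain p where p: "p \<in> J" "c = \<sigma> p" using cJ by blast
        obtain q where q: "q \<in> J" "d = \<sigma> q" using dJ by blast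
        have "t \<in> J" using val[OF p(1) q(1) t(1)] cr p q t by simp
        then show ?thesis using t by blast
      qed
    qed
  qed
  have "inj_on \<sigma> J" using sperm by (meson permutes_inj inj_on_subset subset_UNIV)
  then have "card (\<sigma> ` J) = card J" by (simp add: card_image)
  then have "Suc d - c = Suc b - a" using img Jeq by simp
  then have "d = c + (b - a)" using ab cJ dJ img by auto
  then have "\<sigma> ` {a..b} = {c..c + (b - a)}" using img Jeq by simp
  then have "is_interval \<sigma> a b" unfolding is_interval_def using ab by auto
  then have a0b: "a = 0" "b = m - 1" using simpl bm ab unfolding simple_perm_def by auto
  have J0: "0 \<in> J" "m - 1 \<in> J" using aJ bJ a0b by auto
  obtain x0 where x0: "x0 \<in> V i" "x0 \<in> B 0" using J0(1) unfolding J_def by blast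
  obtain x1 where x1: "x1 \<in> V i" "x1 \<in> B (m-1)" using J0(2) unfolding J_def by blast
  have s0: "s 0 = 0" by (simp add: blk_start_def)
  have vs1: "v i < s 1" using x0 s0 by (simp add: V_def B_def blk_Suc)
  have vs2: "s (m-1) < v i + l i" using x1 by (simp add: V_def B_def)
  have BsubV: "B t \<subseteq> V i" if "1 \<le> t" "t \<le> m - 2" for t
  proof
    fix z assume z: "z \<in> B t"
    have "s 1 \<le> s t" using that by (intro blk_mono) simp
    moreover have "s (Suc t) \<le> s (m-1)" using that m4 by (intro blk_mono) simp
    ultimately show "z \<in> V i" using z vs1 vs2 by (simp add: V_def B_def blk_Suc)
  qed
  have VsubB: "V t \<subseteq> B i" if "1 \<le> t" "t \<le> m - 2" for t
  proof -
    have tm: "t < m" using that m4 by simp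
    have "V t = \<pi> ` B t" using piB[OF tm] by simp
    also have "\<dots> \<subseteq> \<pi> ` V i" using BsubV[OF that] by blast
    also have "\<dots> = B i" using piV[OF im] .
    finally show ?thesis .
  qed
  show False
  proof (cases "i = 0")
    case True
    have "\<sigma> t < \<sigma> 0" if t: "1 \<le> t" "t \<le> m - 2" for t
    proof (rule ccontr)
      assume nl: "\<not> \<sigma> t < \<sigma> 0"
      have tm: "t < m" "(0::nat) < m" "t \<noteq> 0" using t m4 by auto
      have "\<sigma> t \<noteq> \<sigma> 0" using sig_inj[of t 0] tm by blast
      then have "\<sigma> 0 < \<sigma> t" using nl by simp
      then have "v 0 + l 0 \<le> v t" using v_order[of 0 t] t m4 by simp
      moreover have "v t \<in> B 0" using VsubB[OF t] v_in_V[of t] t m4 True by auto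
      ultimately show False using s0 by (simp add: B_def)
    qed
    then show False using SL1 by blast
  next
    case i0: False
    show False
    proof (cases "i = m - 1")
      case True
      have "\<sigma> (m-1) < \<sigma> t" if t: "1 \<le> t" "t \<le> m - 2" for t
      proof (rule ccontr)
        assume nl: "\<not> \<sigma> (m-1) < \<sigma> t"
        have tm: "t < m" "m - 1 < m" "t \<noteq> m - 1" using t m4 by auto
        have "\<sigma> t \<noteq> \<sigma> (m-1)" using sig_inj[of t "m-1"] tm by blast
        then have "\<sigma> t < \<sigma> (m-1)" using nl by simp
        then have o: "v t + l t \<le> v (m-1)" using v_order[of t "m-1"] t m4 by simp
        have "v t \<in> B (m-1)" using VsubB[OF t] v_in_V[of t] t m4 True by auto
        then have 1: "s (m-1) \<le> v t" by (simp add: B_def)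
        have 2: "v (m-1) + l (m-1) \<le> s (m-1) + l (m-1)"
          using v_le[of "m-1"] m4 blk_Suc[of l "m-1"] by simp
        show False using o 1 2 l_pos[of t] tm by simp
      qed
      then show False using SL2 by blast
    next
      case False
      then have t: "1 \<le> i" "i \<le> m - 2" using i0 im by auto
      have "B i \<subseteq> V i" using BsubV[OF t] .
      moreover have "card (B i) = card (V i)" by (simp add: card_B card_V)
      ultimately have "B i = V i" by (intro card_subset_eq) (auto simp: V_def)
      then have "x0 \<in> B i" using x0 by simp
      then show False using B_disj[of i 0] x0 im i0 by auto
    qed
  qed
qed

end


lemma mono_id:
  fixes g :: "nat \<Rightarrow> nat"
  assumes inc: "\<And>i j. i < j \<Longrightarrow> j < m \<Longrightarrow> g i < g j" and bd: "\<And>i. i < m \<Longrightarrow> g i < m"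
    and im: "i < m"
  shows "g i = i"
proof -
  have up: "i + k < m \<Longrightarrow> g i + k \<le> g (i + k)" for k
  proof (induction k)
    case 0 then show ?case by simp
  next
    case (Suc k)
    then have "g (i + k) < g (i + Suc k)" using inc[of "i+k" "i + Suc k"] by simp
    then show ?case using Suc by simp
  qed
  have ge: "j < m \<Longrightarrow> j \<le> g j" for j
  proof (induction j)
    case 0 then show ?case by simp
  next
    case (Suc j)
    then have "g j < g (Suc j)" using inc[of j "Suc j"] by simp
    then show ?case using Suc by simp
  qed
  have "g i + (m - 1 - i) \<le> g (m - 1)" using up[of "m - 1 - i"] im by simp
  moreover have "g (m - 1) < m" using bd im by simp
  ultimately have "g i \<le> i" by simp
  then show ?thesis using ge[OF im] by simp
qed

context infl begin

definition "f i = (SOME j. j < m \<and> V i \<subseteq> B j)"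

lemma f_prop: "i < m \<Longrightarrow> f i < m \<and> V i \<subseteq> B (f i)"
  unfolding f_def using claim by (metis (mono_tags, lifting) someI_ex)

lemma ff: assumes im: "i < m" shows "f (f i) = i" "V (f i) = B i"
proof -
  have fi: "f i < m" "V i \<subseteq> B (f i)" using f_prop im by auto
  have ffi: "f (f i) < m" "V (f i) \<subseteq> B (f (f i))" using f_prop fi(1) by auto
  have "B i = \<pi> ` V i" using piV im by simp
  also have "\<dots> \<subseteq> \<pi> ` B (f i)" using fi by blast
  also have "\<dots> = V (f i)" using piB fi by simp
  finally have 1: "B i \<subseteq> V (f i)" .
  then have "s i \<in> B (f (f i))" using s_in_B[OF im] ffi by blast
  then have si: "s i \<in> B (f (f i))" .
  show e: "f (f i) = i"
  proof (rule ccontr)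
    assume "f (f i) \<noteq> i"
    then have "B i \<inter> B (f (f i)) = {}" using B_disj[of i "f (f i)"] im ffi(1) by simp
    then show False using si s_in_B[OF im] by blast
  qed
  show "V (f i) = B i" using 1 ffi e by simp
qed

lemma VB: assumes im: "i < m" shows "v (f i) = s i" "l (f i) = l i"
proof -
  have e: "V (f i) = B i" using ff im by simp
  show "l (f i) = l i" using e card_V card_B by metis
  have fi: "f i < m" using f_prop im by simp
  have "v (f i) \<in> B i" using e v_in_V[OF fi] by simp
  moreover have "s i \<in> V (f i)" using e s_in_B[OF im] by simp
  ultimately show "v (f i) = s i" by (simp add: B_def V_def)
qed

lemma f_mono: assumes ij: "i < j" "j < m" shows "\<sigma> (f i) < \<sigma> (f j)"
proof -
  have im: "i < m" using ij by simp
  have fi: "f i < m" "f j < m" using f_prop im ij by auto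
  have "s i < s (Suc i)" using l_pos[OF im] by (simp add: blk_Suc)
  also have "\<dots> \<le> s j" using s_sucle ij by blast
  finally have sij: "s i < s j" .
  show ?thesis
  proof (rule ccontr)
    assume nl: "\<not> \<sigma> (f i) < \<sigma> (f j)"
    show False
    proof (cases "\<sigma> (f i) = \<sigma> (f j)")
      case True
      then have "f i = f j" using sig_inj fi by blast
      then have "i = j" using ff(1)[OF im] ff(1)[of j] ij by metis
      then show False using ij by simp
    next
      case False
      then have "\<sigma> (f j) < \<sigma> (f i)" using nl by simp
      then have "v (f j) + l (f j) \<le> v (f i)" using v_order fi by blast
      then show False using VB[OF im] VB[of j] ij sij by simp
    qed
  qed
qed

lemma sig_f: "i < m \<Longrightarrow> \<sigma> (f i) = i"
  using mono_id[of m "\<lambda>i. \<sigma> (f i)" i] f_mono f_prop sig_lt by blast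

lemma sig_eq_f: assumes "i < m" shows "\<sigma> i = f i"
proof -
  have "f i < m" using f_prop assms by simp
  then have "\<sigma> (f (f i)) = f i" using sig_f by blast
  then show ?thesis using ff(1)[OF assms] by simp
qed

lemma sigsig: "\<sigma> (\<sigma> i) = i"
proof (cases "i < m")
  case True then show ?thesis using sig_eq_f ff(1) f_prop by metis
next
  case False then have "\<sigma> i = i" using permutes_not_in[OF sperm] by simp
  then show ?thesis by simp
qed

lemma sig_invol: "involution \<sigma>"
proof -
  have "\<sigma> \<circ> \<sigma> = id" using sigsig by (simp add: fun_eq_iff)
  then have "inv \<sigma> = \<sigma>" using inv_unique_comp by blast
  then show ?thesis by (simp add: involution_def)
qed

lemma l_sig: "i < m \<Longrightarrow> l i = l (\<sigma> i)"
  using VB(2) sig_eq_f by simp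

lemma v_sig: "i < m \<Longrightarrow> v (\<sigma> i) = s i"
  using VB(1) sig_eq_f by simp

lemma v_eq: assumes "i < m" shows "v i = s (\<sigma> i)"
proof -
  have "\<sigma> i < m" using sig_lt assms by simp
  then have "v (\<sigma> (\<sigma> i)) = s (\<sigma> i)" using v_sig by blast
  then show ?thesis using sigsig by simp
qed

lemma comp_id: assumes im: "i < m" shows "\<alpha> (\<sigma> i) \<circ> \<alpha> i = id"
proof (rule ext)
  fix k
  have sm: "\<sigma> i < m" using sig_lt im by simp
  have pi: "\<alpha> i permutes {..<l i}" using la im by simp
  have ps: "\<alpha> (\<sigma> i) permutes {..<l i}" using la sm l_sig[OF im] by simp
  show "(\<alpha> (\<sigma> i) \<circ> \<alpha> i) k = id k"
  proof (cases "k < l i")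
    case True
    define k' where "k' = \<alpha> i k"
    have k': "k' < l (\<sigma> i)" using alpha_lt[OF im True] l_sig[OF im] unfolding k'_def by simp
    have 1: "\<pi> (s i + k) = s (\<sigma> i) + k'" using pi_at[OF im True] v_eq[OF im] unfolding k'_def by simp
    have 2: "\<pi> (s (\<sigma> i) + k') = s i + \<alpha> (\<sigma> i) k'" using pi_at[OF sm k'] v_sig[OF im] by simp
    have "s i + k = s i + \<alpha> (\<sigma> i) k'" using pipi[of "s i + k"] 1 2 by simp
    then show ?thesis unfolding k'_def by simp
  next
    case False
    then have "\<alpha> i k = k" "\<alpha> (\<sigma> i) k = k" using permutes_not_in[OF pi] permutes_not_in[OF ps] by auto
    then show ?thesis by simp
  qed
qed

lemma alpha_inv: assumes im: "i < m" shows "\<alpha> i = inv (\<alpha> (\<sigma> i))"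
proof -
  have sm: "\<sigma> i < m" using sig_lt im by simp
  have 1: "\<alpha> (\<sigma> i) \<circ> \<alpha> i = id" using comp_id[OF im] .
  have 2: "\<alpha> i \<circ> \<alpha> (\<sigma> i) = id" using comp_id[OF sm] sigsig by simp
  show ?thesis using inv_unique_comp[OF 1 2] by simp
qed

end

theorem proposition5p1:
  fixes m :: nat and \<sigma> :: "nat \<Rightarrow> nat" and l :: "nat \<Rightarrow> nat"
    and \<alpha> :: "nat \<Rightarrow> nat \<Rightarrow> nat"
  assumes "m \<ge> 4"
    and "simple_perm m \<sigma>"
    and "\<forall>i<m. l i \<ge> 1 \<and> \<alpha> i permutes {..<l i}"
    and "involution (inflation m \<sigma> l \<alpha>)"
  shows "involution \<sigma> \<and> (\<forall>i<m. l i = l (\<sigma> i) \<and> \<alpha> i = inv (\<alpha> (\<sigma> i)))"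
proof -
  interpret infl m \<sigma> l \<alpha> using assms by unfold_locales
  show ?thesis using sig_invol l_sig alpha_inv by blast
qed


end
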